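(* The $\alpha$-expansion algorithm provides no approximation guarantee better than $\frac12$ for the clique inference problem, even for the homogeneous Potts clique potential $C(\mathbf{v})=\lambda\sum_v n_v(\mathbf{v})^2$ with nonnegative vertex potentials: for every $\varepsilon>0$ there is such an instance (with $\lambda=1$) and an assignment $\tilde{\mathbf{v}}$ which is locally optimal with respect to every $\alpha$-expansion move (so that $\alpha$-expansion terminates at $\tilde{\mathbf{v}}$ when started from it) with $F(\tilde{\mathbf{v}})\le(\frac12+\varepsilon)\max_{\mathbf{v}}F(\mathbf{v})$.
   Context: Clique inference problem: there are $n$ vertices $1,\dots,n$, a finite set $V$ of values, real vertex potentials $\psi_{jv}$, and a clique potential $C$ depending only on the counts $n_v(\mathbf{v})=|\{j:v_j=v\}|$; the objective is $F(\mathbf{v})=\sum_{j}\psi_{jv_j}+C(\mathbf{v})$ over $\mathbf{v}\in V^n$. An $\alpha$-expansion move from an assignment $\tilde{\mathbf{v}}$ (for $\alpha\in V$) replaces $\tilde{\mathbf{v}}$ by an assignment maximizing $F$ among all assignments obtained from $\tilde{\mathbf{v}}$ by switching some subset of vertices to the value $\alpha$ (other vertices keep their values). The $\alpha$-expansion algorithm starts from an initial assignment (e.g. all vertices assigned the first value) and repeatedly performs optimal $\alpha$-expansion moves for each $\alpha\in V$ in turn, stopping when in a full round over all values no vertex changes its value. *)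

theory Defs
  imports Complex_Main "HOL-Library.FuncSet"
begin

definition assignments :: "nat \<Rightarrow> nat set \<Rightarrow> (nat \<Rightarrow> nat) set" where
  "assignments n V = PiE {0..<n} (\<lambda>_. V)"

definition value_count :: "nat \<Rightarrow> (nat \<Rightarrow> nat) \<Rightarrow> nat \<Rightarrow> nat" where
  "value_count n a v = card {j \<in> {0..<n}. a j = v}"

definition potts_F :: "nat \<Rightarrow> nat set \<Rightarrow> (nat \<Rightarrow> nat \<Rightarrow> real) \<Rightarrow> real \<Rightarrow> (nat \<Rightarrow> nat) \<Rightarrow> real" where
  "potts_F n V \<psi> lam a =
     (\<Sum>j<n. \<psi> j (a j)) + lam * (\<Sum>v\<in>V. (real (value_count n a v))^2)"

definition expansion_moves :: "nat \<Rightarrow> nat set \<Rightarrow> (nat \<Rightarrow> nat) \<Rightarrow> nat \<Rightarrow> (nat \<Rightarrow> nat) set" where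
  "expansion_moves n V a \<alpha> = {w \<in> assignments n V. \<forall>j<n. w j = a j \<or> w j = \<alpha>}"

definition expansion_locally_optimal ::
  "nat \<Rightarrow> nat set \<Rightarrow> ((nat \<Rightarrow> nat) \<Rightarrow> real) \<Rightarrow> (nat \<Rightarrow> nat) \<Rightarrow> bool" where
  "expansion_locally_optimal n V F a \<longleftrightarrow>
     a \<in> assignments n V \<and> (\<forall>\<alpha>\<in>V. \<forall>w\<in>expansion_moves n V a \<alpha>. F w \<le> F a)"

end

theory Submission
  imports Defs
begin

definition psi :: "nat \<Rightarrow> nat \<Rightarrow> nat \<Rightarrow> real" where
  "psi n j v = (if v = 0 then 2 else if v = Suc j then 2 * real n else 0)"

lemma potts_F_cong:
  assumes "\<forall>j<n. w j = a j"
  shows "potts_F n V \<psi> lam w = potts_F n V \<psi> lam a"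
proof -
  have "\<And>v. value_count n w v = value_count n a v"
    unfolding value_count_def using assms by (metis (no_types, lifting) atLeastLessThan_iff Collect_cong)
  moreover have "(\<Sum>j<n. \<psi> j (w j)) = (\<Sum>j<n. \<psi> j (a j))"
    using assms by (intro sum.cong) auto
  ultimately show ?thesis unfolding potts_F_def by simp
qed

lemma clique_count:
  assumes "\<forall>j<n. w j = 0 \<or> w j = \<alpha>" "\<alpha> \<in> V" "0 \<in> V" "\<alpha> \<noteq> 0" "finite V"
  shows "(\<Sum>v\<in>V. (real (value_count n w v))^2) =
     (real n - real (card {j\<in>{0..<n}. w j = \<alpha>}))^2 + (real (card {j\<in>{0..<n}. w j = \<alpha>}))^2"
proof -
  define S where "S = {j\<in>{0..<n}. w j = \<alpha>}"
  have Ssub: "S \<subseteq> {0..<n}" unfolding S_def by auto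
  have "{j\<in>{0..<n}. w j = 0} = {0..<n} - S" unfolding S_def using assms(1,4) by auto
  hence c0: "value_count n w 0 = n - card S" unfolding value_count_def
    using Ssub by (simp add: card_Diff_subset finite_subset)
  have cS: "card S \<le> n" using Ssub by (metis card_atLeastLessThan card_mono finite_atLeastLessThan minus_nat.diff_0)
  have ca: "value_count n w \<alpha> = card S" unfolding value_count_def S_def by simp
  have co: "value_count n w v = 0" if "v \<noteq> 0" "v \<noteq> \<alpha>" for v
  proof -
    have "{j\<in>{0..<n}. w j = v} = {}" using assms(1) that by auto
    thus ?thesis unfolding value_count_def by simp
  qed
  have "(\<Sum>v\<in>V. (real (value_count n w v))^2) =
        (\<Sum>v\<in>V. (if v = 0 then (real n - real (card S))^2 else 0) + (if v = \<alpha> then (real (card S))^2 else 0))"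
    apply (rule sum.cong, simp)
    using c0 ca co cS assms(4) by (auto simp: of_nat_diff)
  also have "\<dots> = (real n - real (card S))^2 + (real (card S))^2"
    by (simp add: sum.distrib assms)
  finally show ?thesis unfolding S_def .
qed

lemma psi_sum:
  assumes "\<forall>j<n. w j = 0 \<or> w j = \<alpha>" "\<alpha> \<noteq> 0"
  defines "S \<equiv> {j\<in>{0..<n}. w j = \<alpha>}"
  shows "(\<Sum>j<n. psi n j (w j)) \<le> 2 * (real n - real (card S)) + (if S = {} then 0 else 2 * real n)"
proof -
  have Ssub: "S \<subseteq> {..<n}" unfolding S_def by auto
  have "(\<Sum>j<n. psi n j (w j)) = (\<Sum>j<n. if j \<in> S then psi n j \<alpha> else 2)"
    apply (rule sum.cong, simp) using assms(1,2) unfolding S_def psi_def by auto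
  also have "\<dots> = (\<Sum>j\<in>S. psi n j \<alpha>) + (\<Sum>j\<in>{..<n} - S. 2)"
    using Ssub by (simp add: sum.If_cases Int_absorb1 Diff_eq)
  also have "(\<Sum>j\<in>{..<n} - S. (2::real)) = 2 * (real n - real (card S))"
  proof -
    have "card S \<le> n" using Ssub by (metis card_lessThan card_mono finite_lessThan)
    thus ?thesis using Ssub by (simp add: card_Diff_subset finite_subset of_nat_diff)
  qed
  also have "(\<Sum>j\<in>S. psi n j \<alpha>) \<le> (if S = {} then 0 else 2 * real n)"
  proof (cases "S = {}")
    case True then show ?thesis by simp
  next
    case False
    have "(\<Sum>j\<in>S. psi n j \<alpha>) = (\<Sum>j\<in>S. if j = \<alpha> - 1 then 2 * real n else 0)"
      apply (rule sum.cong, simp) using assms(2) unfolding psi_def by auto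
    also have "\<dots> \<le> 2 * real n" using Ssub finite_subset[OF Ssub] by (simp add: sum.delta)
    finally show ?thesis using False by simp
  qed
  finally show ?thesis by simp
qed

theorem theorem6:
  fixes \<epsilon> :: real
  assumes "\<epsilon> > 0"
  shows "\<exists>(n::nat) (V::nat set) (\<psi>::nat \<Rightarrow> nat \<Rightarrow> real) (a::nat \<Rightarrow> nat).
           0 < n \<and> finite V \<and> V \<noteq> {} \<and>
           (\<forall>j<n. \<forall>v\<in>V. \<psi> j v \<ge> 0) \<and>
           expansion_locally_optimal n V (potts_F n V \<psi> 1) a \<and>
           potts_F n V \<psi> 1 a \<le> (1/2 + \<epsilon>) * Max (potts_F n V \<psi> 1 ` assignments n V)"
proof -
  define n where "n = nat \<lceil>1/\<epsilon>\<rceil> + 1"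
  define V where "V = {0..n}"
  define a where "a = (\<lambda>j. if j < n then (0::nat) else undefined)"
  define b where "b = (\<lambda>j. if j < n then Suc j else undefined)"
  define F where "F = potts_F n V (psi n) 1"
  have n1: "n \<ge> 1" unfolding n_def by simp
  have en: "\<epsilon> * real n \<ge> 1"
  proof -
    have "real n \<ge> 1/\<epsilon>" unfolding n_def by linarith
    thus ?thesis using assms by (simp add: field_simps)
  qed
  have aA: "a \<in> assignments n V" unfolding assignments_def a_def V_def by auto
  have bA: "b \<in> assignments n V" unfolding assignments_def b_def V_def by auto
  have Fa: "F a = 2 * real n + (real n)^2"
  proof -
    have "(\<Sum>v\<in>V. (real (value_count n a v))^2) = (real n - real (card {j\<in>{0..<n}. a j = 1}))^2 + (real (card {j\<in>{0..<n}. a j = 1}))^2"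
      by (rule clique_count) (use n1 in \<open>auto simp: a_def V_def\<close>)
    also have "{j\<in>{0..<n}. a j = 1} = {}" by (auto simp: a_def)
    finally have c: "(\<Sum>v\<in>V. (real (value_count n a v))^2) = (real n)^2" by simp
    have "(\<Sum>j<n. psi n j (a j)) = 2 * real n" by (simp add: a_def psi_def)
    thus ?thesis using c unfolding F_def potts_F_def by simp
  qed
  have Fb: "F b \<ge> 2 * (real n)^2"
  proof -
    have "(\<Sum>j<n. psi n j (b j)) = 2 * (real n)^2" by (simp add: b_def psi_def power2_eq_square)
    moreover have "(\<Sum>v\<in>V. (real (value_count n b v))^2) \<ge> 0" by (simp add: sum_nonneg)
    ultimately show ?thesis unfolding F_def potts_F_def by simp
  qed
  have fin: "finite (F ` assignments n V)" unfolding assignments_def V_def by (simp add: finite_PiE)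
  have Mx: "Max (F ` assignments n V) \<ge> 2 * (real n)^2"
    using Fb Max_ge[OF fin imageI[OF bA]] by linarith
  have opt: "\<forall>\<alpha>\<in>V. \<forall>w\<in>expansion_moves n V a \<alpha>. F w \<le> F a"
  proof (intro ballI)
    fix \<alpha> w assume aV: "\<alpha> \<in> V" and wm: "w \<in> expansion_moves n V a \<alpha>"
    have w01: "\<forall>j<n. w j = 0 \<or> w j = \<alpha>" using wm unfolding expansion_moves_def a_def by auto
    show "F w \<le> F a"
    proof (cases "\<alpha> = 0")
      case True
      then have "\<forall>j<n. w j = a j" using w01 by (simp add: a_def)
      then show ?thesis unfolding F_def using potts_F_cong by (metis order_refl)
    next
      case False
      define s where "s = card {j\<in>{0..<n}. w j = \<alpha>}"
      have sn: "s \<le> n" unfolding s_def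
        by (metis (no_types, lifting) card_atLeastLessThan card_mono finite_atLeastLessThan mem_Collect_eq minus_nat.diff_0 subsetI)
      have c: "(\<Sum>v\<in>V. (real (value_count n w v))^2) = (real n - real s)^2 + (real s)^2"
        unfolding s_def by (rule clique_count) (use w01 aV False in \<open>auto simp: V_def\<close>)
      have p: "(\<Sum>j<n. psi n j (w j)) \<le> 2 * (real n - real s) + (if s = 0 then 0 else 2 * real n)"
        using psi_sum[OF w01 False] unfolding s_def by simp
      have "F w \<le> 2 * (real n - real s) + (if s = 0 then 0 else 2 * real n) + ((real n - real s)^2 + (real s)^2)"
        using c p unfolding F_def potts_F_def by simp
      also have "\<dots> \<le> 2 * real n + (real n)^2"
      proof (cases "s = 0")
        case True then show ?thesis by simp
      next
        case False
        have "(real n - real s) * (real s - 1) \<ge> 0" using sn False by simp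
        then show ?thesis using False by (simp add: power2_eq_square algebra_simps)
      qed
      finally show ?thesis using Fa by simp
    qed
  qed
  have "F a \<le> (1/2 + \<epsilon>) * Max (F ` assignments n V)"
  proof -
    have "\<epsilon> * (real n)^2 \<ge> real n" using en n1 by (simp add: power2_eq_square)
    hence "F a \<le> (1/2 + \<epsilon>) * (2 * (real n)^2)" using Fa by (simp add: algebra_simps)
    also have "\<dots> \<le> (1/2 + \<epsilon>) * Max (F ` assignments n V)"
      using Mx assms by (intro mult_left_mono) auto
    finally show ?thesis .
  qed
  moreover have "\<forall>j<n. \<forall>v\<in>V. psi n j v \<ge> 0" by (simp add: psi_def)
  ultimately show ?thesis
    using opt aA n1 unfolding expansion_locally_optimal_def F_def
    by (intro exI[of _ n] exI[of _ V] exI[of _ "psi n"] exI[of _ a]) (auto simp: V_def)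
qed

end
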